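(* Assume (A1) and let $i,j\in I_N$. For every $(y,x)\in J_j^*\times J_i^*$ there exists a unique $\tau=T(y,x)\in(0,1)$ such that $\mathcal{D}_{\mathrm{implicit}}^{ji}(y,x)=\mathcal{E}_1(\tau,y)+\mathcal{E}_2(\tau,x)$. Moreover, $\mathcal{D}_{\mathrm{implicit}}^{ji}$ is differentiable there with $$\partial_{x_i}\mathcal{D}_{\mathrm{implicit}}^{ji}(y,x)=L_i'\Big(\frac{x_i}{1-T(y,x)}\Big),\qquad \partial_{y_j}\mathcal{D}_{\mathrm{implicit}}^{ji}(y,x)=-L_j'\Big(-\frac{y_j}{T(y,x)}\Big).$$
   Context: Junction: fix an integer $N\ge1$ and $N$ distinct unit vectors $e_1,\dots,e_N\in\mathbb{R}^2$. Set $J_i=[0,\infty)e_i$, $J_i^*=J_i\setminus\{0\}$, $J=\bigcup_iJ_i$, $I_N=\{1,\dots,N\}$. Each $x\in J_i$ is written $x=x_ie_i$, $x_i\ge0$. For a function $f$ on $J\times J$ (variables $(y,x)$), $f^{ji}$ denotes its restriction to $J_j\times J_i$, viewed as a function of $(y_j,x_i)$. (A1): there is $\gamma>0$ with $L_i\in C^2(\mathbb{R})$, $L_i''\ge\gamma$ for each $i$. $L_0(0)=\min_jL_j(0)$. For $\tau\in[0,1]$: $\mathcal{E}_1(\tau,y)=\tau L_j(-y_j/\tau)-\tau L_0(0)$ if $y=y_je_j\ne0$, $\tau\ne0$; $\mathcal{E}_1(\tau,0)=0$; $\mathcal{E}_1(0,y)=+\infty$ if $y\ne0$. $\mathcal{E}_2(\tau,x)=(1-\tau)L_i(x_i/(1-\tau))+\tau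 L_0(0)$ if $x=x_ie_i\ne0$, $\tau\ne1$; $\mathcal{E}_2(\tau,0)=L_0(0)$; $\mathcal{E}_2(1,x)=+\infty$ if $x\ne0$. $\mathcal{D}_{\mathrm{implicit}}(y,x)=\inf_{0\le\tau\le1}\{\mathcal{E}_1(\tau,y)+\mathcal{E}_2(\tau,x)\}$. *)

theory Defs
  imports "HOL-Analysis.Analysis"
begin

text \<open>Junction with branches J_k = [0,\<infinity>) e_k, k \<in> {1..N}, e_k distinct unit vectors in R^2.
  A point y = y_k e_k of J has coordinate y_k = norm y (unit vectors).\<close>

definition branch :: "(nat \<Rightarrow> real^2) \<Rightarrow> nat \<Rightarrow> real^2 \<Rightarrow> nat" where
  "branch e N y = (THE k. k \<in> {1..N} \<and> (\<exists>t\<ge>0. y = t *\<^sub>R e k))"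

definition L00 :: "nat \<Rightarrow> (nat \<Rightarrow> real \<Rightarrow> real) \<Rightarrow> real" where
  "L00 N L = Min ((\<lambda>k. L k 0) ` {1..N})"

definition E1 :: "(nat \<Rightarrow> real^2) \<Rightarrow> nat \<Rightarrow> (nat \<Rightarrow> real \<Rightarrow> real) \<Rightarrow> real \<Rightarrow> real^2 \<Rightarrow> ereal" where
  "E1 e N L \<tau> y =
     (if y = 0 then 0
      else if \<tau> = 0 then \<infinity>
      else ereal (\<tau> * L (branch e N y) (- norm y / \<tau>) - \<tau> * L00 N L))"

definition E2 :: "(nat \<Rightarrow> real^2) \<Rightarrow> nat \<Rightarrow> (nat \<Rightarrow> real \<Rightarrow> real) \<Rightarrow> real \<Rightarrow> real^2 \<Rightarrow> ereal" where
  "E2 e N L \<tau> x =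
     (if x = 0 then ereal (L00 N L)
      else if \<tau> = 1 then \<infinity>
      else ereal ((1 - \<tau>) * L (branch e N x) (norm x / (1 - \<tau>)) + \<tau> * L00 N L))"

definition D_implicit :: "(nat \<Rightarrow> real^2) \<Rightarrow> nat \<Rightarrow> (nat \<Rightarrow> real \<Rightarrow> real) \<Rightarrow> real^2 \<Rightarrow> real^2 \<Rightarrow> ereal" where
  "D_implicit e N L y x = (INF \<tau>\<in>{0..1}. E1 e N L \<tau> y + E2 e N L \<tau> x)"

end

theory Submission
  imports Defs
begin

lemma strong_conv:
  fixes f f' f'' :: "real \<Rightarrow> real"
  assumes d1: "\<forall>z. (f has_real_derivative f' z) (at z)"
    and d2: "\<forall>z. (f' has_real_derivative f'' z) (at z)"
    and ge: "\<forall>z. f'' z \<ge> \<gamma>"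
  shows "convex_on UNIV (\<lambda>z. f z - \<gamma>/2 * z\<^sup>2)"
proof (rule convex_on_realI[where f'="\<lambda>z. f' z - \<gamma> * z"])
  show "connected (UNIV::real set)" by simp
  fix x :: real
  show "((\<lambda>z. f z - \<gamma>/2 * z\<^sup>2) has_real_derivative f' x - \<gamma> * x) (at x)"
    using d1 by (auto intro!: derivative_eq_intros)
next
  fix x y :: real assume "x \<le> y"
  then show "f' x - \<gamma> * x \<le> f' y - \<gamma> * y"
    by (intro DERIV_nonneg_imp_nondecreasing[of x y "\<lambda>z. f' z - \<gamma> * z"])
       (use d2 ge in \<open>auto intro!: derivative_eq_intros\<close>)
qed

lemma strong_ineq:
  fixes f f' f'' :: "real \<Rightarrow> real"
  assumes d1: "\<forall>z. (f has_real_derivative f' z) (at z)"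
    and d2: "\<forall>z. (f' has_real_derivative f'' z) (at z)"
    and ge: "\<forall>z. f'' z \<ge> \<gamma>"
    and u: "0 \<le> u" "u \<le> 1"
  shows "f (u*a + (1-u)*b) \<le> u * f a + (1-u) * f b - \<gamma>/2 * u*(1-u)*(a-b)\<^sup>2"
proof -
  have c: "convex_on UNIV (\<lambda>z. f z - \<gamma>/2 * z\<^sup>2)" by (rule strong_conv[OF d1 d2 ge])
  define m where "m = u*a + (1-u)*b"
  have i: "f m - \<gamma>/2 * m\<^sup>2 \<le>
        u * (f a - \<gamma>/2 * a\<^sup>2) + (1-u) * (f b - \<gamma>/2 * b\<^sup>2)"
    using convex_onD[OF c, of "1-u" a b] u by (simp add: m_def)
  have d1: "u * (f a - \<gamma>/2 * a\<^sup>2) = u * f a - \<gamma>/2 * (u * a\<^sup>2)" by (simp add: algebra_simps)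
  have d2: "(1-u) * (f b - \<gamma>/2 * b\<^sup>2) = (1-u) * f b - \<gamma>/2 * ((1-u) * b\<^sup>2)" by (simp add: field_simps)
  have msq: "m\<^sup>2 = u*a\<^sup>2 + (1-u)*b\<^sup>2 - u*(1-u)*(a-b)\<^sup>2"
    by (simp add: m_def power2_eq_square algebra_simps)
  then have d3: "\<gamma>/2 * m\<^sup>2 = \<gamma>/2 * (u*a\<^sup>2) + \<gamma>/2 * ((1-u)*b\<^sup>2) - \<gamma>/2 * u*(1-u)*(a-b)\<^sup>2"
    by (simp only: msq) (simp add: field_simps)
  from i d1 d2 d3 show ?thesis unfolding m_def[symmetric] by linarith
qed

lemma tangent_bound:
  fixes f f' f'' :: "real \<Rightarrow> real"
  assumes d1: "\<forall>z. (f has_real_derivative f' z) (at z)"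
    and d2: "\<forall>z. (f' has_real_derivative f'' z) (at z)"
    and ge: "\<forall>z. f'' z \<ge> \<gamma>"
  shows "f z \<ge> f 0 + f' 0 * z + \<gamma>/2 * z\<^sup>2"
proof -
  have c: "convex_on UNIV (\<lambda>z. f z - \<gamma>/2 * z\<^sup>2)" by (rule strong_conv[OF d1 d2 ge])
  have "(\<lambda>z. f z - \<gamma>/2 * z\<^sup>2) z - (\<lambda>z. f z - \<gamma>/2 * z\<^sup>2) 0 \<ge> (f' 0 - \<gamma> * 0) * (z - 0)"
    by (rule convex_on_imp_above_tangent[OF c]) (use d1 in \<open>auto intro!: derivative_eq_intros\<close>)
  then show ?thesis by simp
qed

lemma persp:
  fixes f f' f'' :: "real \<Rightarrow> real"
  assumes d1: "\<forall>z. (f has_real_derivative f' z) (at z)"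
    and d2: "\<forall>z. (f' has_real_derivative f'' z) (at z)"
    and ge: "\<forall>z. f'' z \<ge> \<gamma>"
    and t: "t1 > 0" "t2 > 0"
  shows "t1 * f (u1/t1) + t2 * f (u2/t2) \<ge> (t1+t2) * f ((u1+u2)/(t1+t2))
           + (t1+t2) * (\<gamma>/2 * (t1/(t1+t2))*(1-t1/(t1+t2))*(u1/t1-u2/t2)\<^sup>2)"
proof -
  define u where "u = t1/(t1+t2)"
  have u: "0 \<le> u" "u \<le> 1" using t by (auto simp: u_def)
  have tt: "t1+t2 > 0" using t by simp
  have 1: "1 - u = t2/(t1+t2)" using t by (simp add: u_def field_simps)
  have e1: "u*(u1/t1) = u1/(t1+t2)" using t tt by (simp add: u_def)
  have e2: "(1-u)*(u2/t2) = u2/(t1+t2)" using t tt unfolding 1 by simp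
  have e: "u*(u1/t1) + (1-u)*(u2/t2) = (u1+u2)/(t1+t2)"
    unfolding e1 e2 by (simp add: add_divide_distrib)
  have "f ((u1+u2)/(t1+t2)) \<le> u * f (u1/t1) + (1-u) * f (u2/t2) - \<gamma>/2 * u*(1-u)*(u1/t1-u2/t2)\<^sup>2"
    using strong_ineq[OF d1 d2 ge u, of "u1/t1" "u2/t2"] e by simp
  then have "(t1+t2) * f ((u1+u2)/(t1+t2)) \<le> (t1+t2) * (u * f (u1/t1) + (1-u) * f (u2/t2) - \<gamma>/2 * u*(1-u)*(u1/t1-u2/t2)\<^sup>2)"
    using t by (intro mult_left_mono) auto
  also have "\<dots> = t1 * f (u1/t1) + t2 * f (u2/t2) - (t1+t2) * (\<gamma>/2 * u*(1-u)*(u1/t1-u2/t2)\<^sup>2)"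
  proof -
    have a1: "(t1+t2) * (u * f (u1/t1)) = t1 * f (u1/t1)" using tt by (simp add: u_def)
    have a2: "(t1+t2) * ((1-u) * f (u2/t2)) = t2 * f (u2/t2)" using tt unfolding 1 by simp
    show ?thesis by (simp only: distrib_left right_diff_distrib a1 a2)
  qed
  finally show ?thesis unfolding u_def by simp
qed

definition GG :: "(real\<Rightarrow>real) \<Rightarrow> (real\<Rightarrow>real) \<Rightarrow> real \<Rightarrow> real \<Rightarrow> real \<Rightarrow> real" where
  "GG Lj Li a b \<tau> = \<tau> * Lj (-a/\<tau>) + (1-\<tau>) * Li (b/(1-\<tau>))"

lemma GG_mid:
  fixes Lj Lj' Lj'' Li Li' Li'' :: "real \<Rightarrow> real"
  assumes dj1: "\<forall>z. (Lj has_real_derivative Lj' z) (at z)"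
    and dj2: "\<forall>z. (Lj' has_real_derivative Lj'' z) (at z)"
    and gj: "\<forall>z. Lj'' z \<ge> \<gamma>"
    and di1: "\<forall>z. (Li has_real_derivative Li' z) (at z)"
    and di2: "\<forall>z. (Li' has_real_derivative Li'' z) (at z)"
    and gi: "\<forall>z. Li'' z \<ge> \<gamma>"
    and g: "\<gamma> > 0"
    and t: "0 < t1" "t1 < 1" "0 < t2" "t2 < 1"
  shows "GG Lj Li a1 b1 t1 + GG Lj Li a2 b2 t2 \<ge> 2 * GG Lj Li ((a1+a2)/2) ((b1+b2)/2) ((t1+t2)/2)
          + (t1+t2) * (\<gamma>/2 * (t1/(t1+t2))*(1-t1/(t1+t2))*((-a1)/t1-(-a2)/t2)\<^sup>2)"
proof -
  have pj: "t1 * Lj ((-a1)/t1) + t2 * Lj ((-a2)/t2) \<ge> (t1+t2) * Lj (((-a1)+(-a2))/(t1+t2))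
           + (t1+t2) * (\<gamma>/2 * (t1/(t1+t2))*(1-t1/(t1+t2))*((-a1)/t1-(-a2)/t2)\<^sup>2)"
    by (rule persp[OF dj1 dj2 gj]) (use t in auto)
  have pi: "(1-t1) * Li (b1/(1-t1)) + (1-t2) * Li (b2/(1-t2)) \<ge> ((1-t1)+(1-t2)) * Li ((b1+b2)/((1-t1)+(1-t2)))
           + ((1-t1)+(1-t2)) * (\<gamma>/2 * ((1-t1)/((1-t1)+(1-t2)))*(1-(1-t1)/((1-t1)+(1-t2)))*(b1/(1-t1)-b2/(1-t2))\<^sup>2)"
    by (rule persp[OF di1 di2 gi]) (use t in auto)
  have q: "0 \<le> ((1-t1)+(1-t2)) * (\<gamma>/2 * ((1-t1)/((1-t1)+(1-t2)))*(1-(1-t1)/((1-t1)+(1-t2)))*(b1/(1-t1)-b2/(1-t2))\<^sup>2)"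
  proof -
    have "(1-t1)/((1-t1)+(1-t2)) \<le> 1" using t by (simp add: divide_le_eq)
    then show ?thesis using t g by (intro mult_nonneg_nonneg) auto
  qed
  have e1: "((-a1)+(-a2))/(t1+t2) = -((a1+a2)/2)/((t1+t2)/2)" using t by (simp add: field_simps)
  have e2: "(b1+b2)/((1-t1)+(1-t2)) = ((b1+b2)/2)/(1-(t1+t2)/2)" using t by (simp add: field_simps)
  define X where "X = -((a1+a2)/2)/((t1+t2)/2)"
  define Y where "Y = ((b1+b2)/2)/(1-(t1+t2)/2)"
  have f1: "(t1+t2) * Lj X = 2 * ((t1+t2)/2 * Lj X)" by simp
  have f2: "((1-t1)+(1-t2)) * Li Y = 2 * ((1-(t1+t2)/2) * Li Y)" by (simp add: field_simps)
  have g1: "GG Lj Li ((a1+a2)/2) ((b1+b2)/2) ((t1+t2)/2) = (t1+t2)/2 * Lj X + (1-(t1+t2)/2) * Li Y"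
    unfolding GG_def X_def Y_def ..
  define Pj where "Pj = (t1+t2) * (\<gamma>/2 * (t1/(t1+t2))*(1-t1/(t1+t2))*((-a1)/t1-(-a2)/t2)\<^sup>2)"
  define Pi where "Pi = ((1-t1)+(1-t2)) * (\<gamma>/2 * ((1-t1)/((1-t1)+(1-t2)))*(1-(1-t1)/((1-t1)+(1-t2)))*(b1/(1-t1)-b2/(1-t2))\<^sup>2)"
  have "2 * GG Lj Li ((a1+a2)/2) ((b1+b2)/2) ((t1+t2)/2) + Pj
      = (t1+t2) * Lj X + ((1-t1)+(1-t2)) * Li Y + Pj" unfolding g1 f1 f2 by (simp add: distrib_left)
  also have "\<dots> \<le> ((t1+t2) * Lj X + Pj) + (((1-t1)+(1-t2)) * Li Y + Pi)"
    using q unfolding Pi_def by simp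
  also have "\<dots> \<le> (t1 * Lj ((-a1)/t1) + t2 * Lj ((-a2)/t2)) + ((1-t1) * Li (b1/(1-t1)) + (1-t2) * Li (b2/(1-t2)))"
    apply (rule add_mono)
    using pj pi unfolding Pj_def Pi_def e1 e2 X_def[symmetric] Y_def[symmetric] by simp_all
  also have "\<dots> = GG Lj Li a1 b1 t1 + GG Lj Li a2 b2 t2" unfolding GG_def by simp
  finally show ?thesis unfolding Pj_def .
qed

context
  fixes Lj Lj' Lj'' Li Li' Li'' :: "real \<Rightarrow> real" and \<gamma> :: real
  assumes dj1: "\<forall>z. (Lj has_real_derivative Lj' z) (at z)"
    and dj2: "\<forall>z. (Lj' has_real_derivative Lj'' z) (at z)"
    and gj: "\<forall>z. Lj'' z \<ge> \<gamma>"
    and di1: "\<forall>z. (Li has_real_derivative Li' z) (at z)"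
    and di2: "\<forall>z. (Li' has_real_derivative Li'' z) (at z)"
    and gi: "\<forall>z. Li'' z \<ge> \<gamma>"
    and gpos: "\<gamma> > 0"
begin

lemma GG_unique:
  assumes a: "a > 0"
    and t1: "t1 \<in> {0<..<1}" "\<forall>\<tau>\<in>{0<..<1}. GG Lj Li a b t1 \<le> GG Lj Li a b \<tau>"
    and t2: "t2 \<in> {0<..<1}" "\<forall>\<tau>\<in>{0<..<1}. GG Lj Li a b t2 \<le> GG Lj Li a b \<tau>"
  shows "t1 = t2"
proof (rule ccontr)
  assume ne: "t1 \<noteq> t2"
  define P where "P = (t1+t2) * (\<gamma>/2 * (t1/(t1+t2))*(1-t1/(t1+t2))*((-a)/t1-(-a)/t2)\<^sup>2)"
  have m: "GG Lj Li a b t1 + GG Lj Li a b t2 \<ge> 2 * GG Lj Li ((a+a)/2) ((b+b)/2) ((t1+t2)/2) + P"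
    unfolding P_def using t1 t2 by (intro GG_mid[OF dj1 dj2 gj di1 di2 gi gpos]) auto
  have mid: "(t1+t2)/2 \<in> {0<..<1}" using t1 t2 by auto
  have "GG Lj Li a b t1 \<le> GG Lj Li a b ((t1+t2)/2)" using t1 mid by blast
  moreover have "GG Lj Li a b t1 = GG Lj Li a b t2" using t1 t2 by (meson order_antisym)
  ultimately have "P \<le> 0" using m by simp
  moreover have "P > 0"
  proof -
    have tt: "t1 + t2 > 0" using t1 t2 by auto
    have l1: "t1/(t1+t2) > 0" using t1 tt by auto
    have l2: "t1/(t1+t2) < 1" using t1 t2 tt by (simp add: divide_less_eq)
    have "(-a)/t1 \<noteq> (-a)/t2" using ne a t1 t2 by (auto simp: divide_simps)
    then have sq: "((-a)/t1-(-a)/t2)\<^sup>2 > 0" by simp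
    show ?thesis unfolding P_def using tt l1 l2 sq gpos by (intro mult_pos_pos) auto
  qed
  ultimately show False by simp
qed

lemma GG_exists:
  assumes a: "a > 0" and b: "b > 0"
  shows "\<exists>t0\<in>{0<..<1}. \<forall>\<tau>\<in>{0<..<1}. GG Lj Li a b t0 \<le> GG Lj Li a b \<tau>"
proof -
  have tj: "\<And>z. Lj z \<ge> Lj 0 + Lj' 0 * z + \<gamma>/2 * z\<^sup>2" by (rule tangent_bound[OF dj1 dj2 gj])
  have ti: "\<And>z. Li z \<ge> Li 0 + Li' 0 * z + \<gamma>/2 * z\<^sup>2" by (rule tangent_bound[OF di1 di2 gi])
  define C where "C = - \<bar>Lj 0\<bar> - \<bar>Li 0\<bar> - \<bar>Lj' 0\<bar> * a - \<bar>Li' 0\<bar> * b"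
  have low: "GG Lj Li a b \<tau> \<ge> C + \<gamma>*a\<^sup>2/(2*\<tau>) + \<gamma>*b\<^sup>2/(2*(1-\<tau>))" if t: "\<tau> \<in> {0<..<1}" for \<tau>
  proof -
    from t have t0: "\<tau> > 0" "\<tau> < 1" by auto
    have "\<tau> * Lj (-a/\<tau>) \<ge> \<tau> * (Lj 0 + Lj' 0 * (-a/\<tau>) + \<gamma>/2 * (-a/\<tau>)\<^sup>2)"
      using tj[of "-a/\<tau>"] t0 by (intro mult_left_mono) auto
    also have "\<tau> * (Lj 0 + Lj' 0 * (-a/\<tau>) + \<gamma>/2 * (-a/\<tau>)\<^sup>2) = \<tau> * Lj 0 - Lj' 0 * a + \<gamma>*a\<^sup>2/(2*\<tau>)"
      using t0 by (simp add: field_simps power2_eq_square)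
    finally have A: "\<tau> * Lj (-a/\<tau>) \<ge> \<tau> * Lj 0 - Lj' 0 * a + \<gamma>*a\<^sup>2/(2*\<tau>)" .
    have "(1-\<tau>) * Li (b/(1-\<tau>)) \<ge> (1-\<tau>) * (Li 0 + Li' 0 * (b/(1-\<tau>)) + \<gamma>/2 * (b/(1-\<tau>))\<^sup>2)"
      using ti[of "b/(1-\<tau>)"] t0 by (intro mult_left_mono) auto
    also have "(1-\<tau>) * (Li 0 + Li' 0 * (b/(1-\<tau>)) + \<gamma>/2 * (b/(1-\<tau>))\<^sup>2) = (1-\<tau>) * Li 0 + Li' 0 * b + \<gamma>*b\<^sup>2/(2*(1-\<tau>))"
    proof -
      have eqB: "\<And>w. w > 0 \<Longrightarrow> w * (Li 0 + Li' 0 * (b/w) + \<gamma>/2 * (b/w)\<^sup>2) = w * Li 0 + Li' 0 * b + \<gamma>*b\<^sup>2/(2*w)"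
        by (simp add: field_simps power2_eq_square)
      show ?thesis using eqB[of "1-\<tau>"] t0 by simp
    qed
    finally have B: "(1-\<tau>) * Li (b/(1-\<tau>)) \<ge> (1-\<tau>) * Li 0 + Li' 0 * b + \<gamma>*b\<^sup>2/(2*(1-\<tau>))" .
    have c1: "\<tau> * Lj 0 \<ge> - \<bar>Lj 0\<bar>"
    proof -
      have "\<bar>\<tau> * Lj 0\<bar> \<le> \<bar>Lj 0\<bar>" using t0 by (simp add: abs_mult mult_left_le_one_le)
      then show ?thesis by linarith
    qed
    have c2: "(1-\<tau>) * Li 0 \<ge> - \<bar>Li 0\<bar>"
    proof -
      have "\<bar>(1-\<tau>) * Li 0\<bar> \<le> \<bar>Li 0\<bar>" using t0 by (simp add: abs_mult mult_left_le_one_le)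
      then show ?thesis by linarith
    qed
    have c3: "- Lj' 0 * a \<ge> - \<bar>Lj' 0\<bar> * a" using a by (simp add: mult_right_mono)
    have c4: "Li' 0 * b \<ge> - \<bar>Li' 0\<bar> * b" using b abs_ge_minus_self[of "Li' 0"]
      by (intro mult_right_mono) auto
    show ?thesis using A B c1 c2 c3 c4 unfolding GG_def C_def by linarith
  qed
  define M where "M = GG Lj Li a b (1/2)"
  have "M \<ge> C + \<gamma>*a\<^sup>2/(2*(1/2)) + \<gamma>*b\<^sup>2/(2*(1-1/2))" unfolding M_def by (rule low) auto
  moreover have "\<gamma>*a\<^sup>2/(2*(1/2)) > 0" "\<gamma>*b\<^sup>2/(2*(1-1/2)) > 0" using a b gpos by auto
  ultimately have K: "M - C + 1 > 0" by linarith
  define K where "K = M - C + 1"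
  define \<delta> where "\<delta> = min (1/4) (min (\<gamma>*a\<^sup>2/(2*K)) (\<gamma>*b\<^sup>2/(2*K)))"
  have dpos: "\<delta> > 0" unfolding \<delta>_def using K a b gpos by (auto simp: K_def)
  have dle: "\<delta> \<le> 1/4" unfolding \<delta>_def by simp
  have big: "GG Lj Li a b \<tau> > M" if t: "\<tau> \<in> {0<..<1}" "\<tau> \<notin> {\<delta>..1-\<delta>}" for \<tau>
  proof -
    have t0: "\<tau> > 0" "\<tau> < 1" using t by auto
    have pa: "\<gamma>*a\<^sup>2/(2*\<tau>) \<ge> 0" "\<gamma>*b\<^sup>2/(2*(1-\<tau>)) \<ge> 0" using t0 gpos by auto
    consider "\<tau> < \<delta>" | "\<tau> > 1 - \<delta>" using t by auto
    then show ?thesis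
    proof cases
      case 1
      have "\<delta> \<le> \<gamma>*a\<^sup>2/(2*K)" unfolding \<delta>_def by simp
      then have "\<tau> \<le> \<gamma>*a\<^sup>2/(2*K)" using 1 by simp
      then have "\<tau> * (2*K) \<le> \<gamma>*a\<^sup>2" using K by (simp add: K_def le_divide_eq)
      then have "K \<le> \<gamma>*a\<^sup>2/(2*\<tau>)" using t0 by (simp add: le_divide_eq mult.commute mult.left_commute)
      then show ?thesis using low[OF t(1)] pa unfolding K_def by linarith
    next
      case 2
      have "\<delta> \<le> \<gamma>*b\<^sup>2/(2*K)" unfolding \<delta>_def by simp
      then have "1-\<tau> \<le> \<gamma>*b\<^sup>2/(2*K)" using 2 by simp
      then have "(1-\<tau>) * (2*K) \<le> \<gamma>*b\<^sup>2" using K by (simp add: K_def le_divide_eq)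
      then have "K \<le> \<gamma>*b\<^sup>2/(2*(1-\<tau>))" using t0 by (simp add: le_divide_eq mult.commute mult.left_commute)
      then show ?thesis using low[OF t(1)] pa unfolding K_def by linarith
    qed
  qed
  have cj: "isCont Lj z" for z using dj1 DERIV_isCont by blast
  have ci: "isCont Li z" for z using di1 DERIV_isCont by blast
  have cont: "continuous_on {\<delta>..1-\<delta>} (GG Lj Li a b)"
  proof (rule continuous_at_imp_continuous_on, intro ballI)
    fix \<tau> assume t: "\<tau> \<in> {\<delta>..1-\<delta>}"
    then have t0: "\<tau> \<noteq> 0" "1 - \<tau> \<noteq> 0" using dpos by auto
    have "isCont (\<lambda>\<tau>. Lj (-a/\<tau>)) \<tau>"
      by (rule isCont_o2[OF _ cj]) (use t0 in \<open>intro continuous_intros, auto\<close>)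
    moreover have "isCont (\<lambda>\<tau>. Li (b/(1-\<tau>))) \<tau>"
      by (rule isCont_o2[OF _ ci]) (use t0 in \<open>intro continuous_intros, auto\<close>)
    ultimately show "isCont (GG Lj Li a b) \<tau>" unfolding GG_def[abs_def]
      by (intro continuous_intros) auto
  qed
  have ne: "{\<delta>..1-\<delta>} \<noteq> {}" using dle by auto
  obtain t0 where t0: "t0 \<in> {\<delta>..1-\<delta>}" "\<forall>y\<in>{\<delta>..1-\<delta>}. GG Lj Li a b t0 \<le> GG Lj Li a b y"
    using continuous_attains_inf[OF compact_Icc ne cont] by blast
  have half: "1/2 \<in> {\<delta>..1-\<delta>}" using dle by auto
  have t0M: "GG Lj Li a b t0 \<le> M" using t0(2) half unfolding M_def by blast
  show ?thesis
  proof (intro bexI ballI)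
    show "t0 \<in> {0<..<1}" using t0(1) dpos dle by auto
    fix \<tau> :: real assume t: "\<tau> \<in> {0<..<1}"
    show "GG Lj Li a b t0 \<le> GG Lj Li a b \<tau>"
    proof (cases "\<tau> \<in> {\<delta>..1-\<delta>}")
      case True then show ?thesis using t0 by blast
    next
      case False then show ?thesis using big[OF t] t0M by linarith
    qed
  qed
qed

end

lemma phi_deriv:
  fixes Lj Li Lj' Li' :: "real \<Rightarrow> real"
  assumes "\<forall>z. (Lj has_real_derivative Lj' z) (at z)" "\<forall>z. (Li has_real_derivative Li' z) (at z)"
  and t: "0 < t0" "t0 < 1"
  shows "((\<lambda>q::real\<times>real. t0 * Lj (-fst q/t0) + (1-t0) * Li (snd q/(1-t0))) has_derivative
     (\<lambda>q. fst q * (- Lj' (-s/t0)) + snd q * Li' (r/(1-t0)))) (at (s,r))"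
proof -
  have a: "DERIV Lj ((\<lambda>q. -fst q/t0) (s,r)) :> Lj' (-s/t0)" using assms by simp
  have b: "DERIV Li ((\<lambda>q. snd q/(1-t0)) (s,r)) :> Li' (r/(1-t0))" using assms by simp
  have ga: "((\<lambda>q::real\<times>real. -fst q/t0) has_derivative (\<lambda>q. -fst q/t0)) (at (s,r))"
    using t by (intro derivative_eq_intros) auto
  have gb: "((\<lambda>q::real\<times>real. snd q/(1-t0)) has_derivative (\<lambda>q. snd q/(1-t0))) (at (s,r))"
    using t by (intro derivative_eq_intros) auto
  have A: "((\<lambda>q. Lj (-fst q/t0)) has_derivative (\<lambda>q. (-fst q/t0) * Lj' (-s/t0))) (at (s,r))"
    using DERIV_compose_FDERIV[OF a ga] by simp
  have B: "((\<lambda>q. Li (snd q/(1-t0))) has_derivative (\<lambda>q. (snd q/(1-t0)) * Li' (r/(1-t0)))) (at (s,r))"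
    using DERIV_compose_FDERIV[OF b gb] by simp
  have C: "((\<lambda>q::real\<times>real. t0 * Lj (-fst q/t0) + (1-t0) * Li (snd q/(1-t0))) has_derivative
     (\<lambda>q. t0 * ((-fst q/t0) * Lj' (-s/t0)) + (1-t0) * ((snd q/(1-t0)) * Li' (r/(1-t0))))) (at (s,r))"
    by (intro has_derivative_add has_derivative_mult_right A B)
  show ?thesis
    apply (rule has_derivative_eq_rhs[OF C])
    using t by (auto simp: fun_eq_iff)
qed

lemma branch_scale:
  assumes inj: "inj_on e {1..N}" and unit: "\<forall>k\<in>{1..N}. norm (e k) = 1"
    and j: "j \<in> {1..N}" and a: "a > 0"
  shows "branch e N (a *\<^sub>R e j) = j"
  unfolding branch_def
proof (rule the_equality)
  show "j \<in> {1..N} \<and> (\<exists>t\<ge>0. a *\<^sub>R e j = t *\<^sub>R e j)" using j a less_imp_le by blast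
next
  fix k assume k: "k \<in> {1..N} \<and> (\<exists>t\<ge>0. a *\<^sub>R e j = t *\<^sub>R e k)"
  then obtain t where t: "t \<ge> 0" "a *\<^sub>R e j = t *\<^sub>R e k" by blast
  have "norm (a *\<^sub>R e j) = norm (t *\<^sub>R e k)" using t by simp
  then have "a = t" using unit j k a t(1) by simp
  then have "e j = e k" using t(2) a by simp
  then show "k = j" using inj j k by (metis inj_onD)
qed

lemma E_sum:
  assumes inj: "inj_on e {1..N}" and unit: "\<forall>k\<in>{1..N}. norm (e k) = 1"
    and ij: "i \<in> {1..N}" "j \<in> {1..N}" and a: "a > 0" and b: "b > 0"
  shows "\<tau> \<in> {0<..<1} \<Longrightarrow> E1 e N L \<tau> (a *\<^sub>R e j) + E2 e N L \<tau> (b *\<^sub>R e i) = ereal (GG (L j) (L i) a b \<tau>)"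
    and "E1 e N L 0 (a *\<^sub>R e j) + E2 e N L 0 (b *\<^sub>R e i) = \<infinity>"
    and "E1 e N L 1 (a *\<^sub>R e j) + E2 e N L 1 (b *\<^sub>R e i) = \<infinity>"
proof -
  have nj: "norm (a *\<^sub>R e j) = a" using unit ij a by simp
  have ni: "norm (b *\<^sub>R e i) = b" using unit ij b by simp
  have yj: "a *\<^sub>R e j \<noteq> 0" using nj a by auto
  have xi: "b *\<^sub>R e i \<noteq> 0" using ni b by auto
  have bj: "branch e N (a *\<^sub>R e j) = j" by (rule branch_scale[OF inj unit ij(2) a])
  have bi: "branch e N (b *\<^sub>R e i) = i" by (rule branch_scale[OF inj unit ij(1) b])
  { assume t: "\<tau> \<in> {0<..<1}"
    then show "E1 e N L \<tau> (a *\<^sub>R e j) + E2 e N L \<tau> (b *\<^sub>R e i) = ereal (GG (L j) (L i) a b \<tau>)"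
      unfolding E1_def E2_def GG_def using yj xi bj bi nj ni by auto }
  show "E1 e N L 0 (a *\<^sub>R e j) + E2 e N L 0 (b *\<^sub>R e i) = \<infinity>"
    unfolding E1_def E2_def using yj xi by simp
  show "E1 e N L 1 (a *\<^sub>R e j) + E2 e N L 1 (b *\<^sub>R e i) = \<infinity>"
    unfolding E1_def E2_def using yj xi by simp
qed

lemma D_eq:
  assumes inj: "inj_on e {1..N}" and unit: "\<forall>k\<in>{1..N}. norm (e k) = 1"
    and ij: "i \<in> {1..N}" "j \<in> {1..N}" and a: "a > 0" and b: "b > 0"
    and t0: "t0 \<in> {0<..<1}" "\<forall>\<tau>\<in>{0<..<1}. GG (L j) (L i) a b t0 \<le> GG (L j) (L i) a b \<tau>"
  shows "D_implicit e N L (a *\<^sub>R e j) (b *\<^sub>R e i) = ereal (GG (L j) (L i) a b t0)"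
  unfolding D_implicit_def
proof (rule antisym)
  show "(INF \<tau>\<in>{0..1}. E1 e N L \<tau> (a *\<^sub>R e j) + E2 e N L \<tau> (b *\<^sub>R e i)) \<le> ereal (GG (L j) (L i) a b t0)"
    using t0(1) E_sum(1)[OF inj unit ij a b t0(1), of L, symmetric]
    by (intro INF_lower2[of t0]) auto
  show "ereal (GG (L j) (L i) a b t0) \<le> (INF \<tau>\<in>{0..1}. E1 e N L \<tau> (a *\<^sub>R e j) + E2 e N L \<tau> (b *\<^sub>R e i))"
  proof (rule INF_greatest)
    fix \<tau> :: real assume t: "\<tau> \<in> {0..1}"
    consider "\<tau> = 0" | "\<tau> = 1" | "\<tau> \<in> {0<..<1}" using t by fastforce
    then show "ereal (GG (L j) (L i) a b t0) \<le> E1 e N L \<tau> (a *\<^sub>R e j) + E2 e N L \<tau> (b *\<^sub>R e i)"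
    proof cases
      case 1 then show ?thesis unfolding 1 E_sum(2)[OF inj unit ij a b] by simp
    next
      case 2 then show ?thesis unfolding 2 E_sum(3)[OF inj unit ij a b] by simp
    next
      case 3 then show ?thesis using E_sum(1)[OF inj unit ij a b 3] t0(2) by simp
    qed
  qed
qed

theorem mainTheorem19:
  fixes N :: nat and e :: "nat \<Rightarrow> real^2"
    and L L' L'' :: "nat \<Rightarrow> real \<Rightarrow> real" and \<gamma> :: real
    and i j :: nat and s r :: real
  assumes N: "N \<ge> 1"
    and e_inj: "inj_on e {1..N}"
    and e_unit: "\<forall>k\<in>{1..N}. norm (e k) = 1"
    and \<gamma>: "\<gamma> > 0"
    and L1: "\<forall>k\<in>{1..N}. \<forall>z. (L k has_real_derivative L' k z) (at z)"
    and L2: "\<forall>k\<in>{1..N}. \<forall>z. (L' k has_real_derivative L'' k z) (at z)"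
    and L2cont: "\<forall>k\<in>{1..N}. continuous_on UNIV (L'' k)"
    and L2ge: "\<forall>k\<in>{1..N}. \<forall>z. L'' k z \<ge> \<gamma>"
    and ij: "i \<in> {1..N}" "j \<in> {1..N}"
    and sr: "s > 0" "r > 0"
  shows "(\<exists>!\<tau>. \<tau> \<in> {0<..<1} \<and>
            D_implicit e N L (s *\<^sub>R e j) (r *\<^sub>R e i)
              = E1 e N L \<tau> (s *\<^sub>R e j) + E2 e N L \<tau> (r *\<^sub>R e i))
       \<and> (let T = (THE \<tau>. \<tau> \<in> {0<..<1} \<and>
                      D_implicit e N L (s *\<^sub>R e j) (r *\<^sub>R e i)
                        = E1 e N L \<tau> (s *\<^sub>R e j) + E2 e N L \<tau> (r *\<^sub>R e i))
          in ((\<lambda>(a, b). real_of_ereal (D_implicit e N L (a *\<^sub>R e j) (b *\<^sub>R e i)))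
               has_derivative
               (\<lambda>(h, k). h * (- L' j (- s / T)) + k * L' i (r / (1 - T)))) (at (s, r)))"
proof -
  have dj1: "\<forall>z. (L j has_real_derivative L' j z) (at z)" using L1 ij by blast
  have dj2: "\<forall>z. (L' j has_real_derivative L'' j z) (at z)" using L2 ij by blast
  have gj: "\<forall>z. L'' j z \<ge> \<gamma>" using L2ge ij by blast
  have di1: "\<forall>z. (L i has_real_derivative L' i z) (at z)" using L1 ij by blast
  have di2: "\<forall>z. (L' i has_real_derivative L'' i z) (at z)" using L2 ij by blast
  have gi: "\<forall>z. L'' i z \<ge> \<gamma>" using L2ge ij by blast
  define P where "P = (\<lambda>a b t. t \<in> {0<..<1} \<and> (\<forall>\<tau>\<in>{0<..<1}. GG (L j) (L i) a b t \<le> GG (L j) (L i) a b \<tau>))"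
  define Tm where "Tm = (\<lambda>a b. SOME t. P a b t)"
  have TmP: "P a b (Tm a b)" if "a > 0" "b > 0" for a b
  proof -
    have "\<exists>t. P a b t" using GG_exists[OF dj1 dj2 gj di1 di2 gi \<gamma> that] unfolding P_def by blast
    then show ?thesis unfolding Tm_def by (rule someI_ex)
  qed
  define V where "V = (\<lambda>q::real\<times>real. real_of_ereal (D_implicit e N L (fst q *\<^sub>R e j) (snd q *\<^sub>R e i)))"
  have Vval: "V (a,b) = GG (L j) (L i) a b (Tm a b)" if "a > 0" "b > 0" for a b
  proof -
    have p: "Tm a b \<in> {0<..<1}" "\<forall>\<tau>\<in>{0<..<1}. GG (L j) (L i) a b (Tm a b) \<le> GG (L j) (L i) a b \<tau>"
      using TmP[OF that] unfolding P_def by blast+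
    have "D_implicit e N L (a *\<^sub>R e j) (b *\<^sub>R e i) = ereal (GG (L j) (L i) a b (Tm a b))"
      by (rule D_eq[OF e_inj e_unit ij that p])
    then show ?thesis unfolding V_def by simp
  qed
  have Vle: "V (a,b) \<le> GG (L j) (L i) a b \<tau>" if "a > 0" "b > 0" "\<tau> \<in> {0<..<1}" for a b \<tau>
    using Vval[OF that(1,2)] TmP[OF that(1,2)] that(3) unfolding P_def by auto
  have Vmid: "V (a1,b1) + V (a2,b2) \<ge> 2 * V ((a1+a2)/2, (b1+b2)/2)"
    if pos: "a1 > 0" "b1 > 0" "a2 > 0" "b2 > 0" for a1 b1 a2 b2
  proof -
    define t1 where "t1 = Tm a1 b1"
    define t2 where "t2 = Tm a2 b2"
    have p1: "t1 \<in> {0<..<1}" using TmP[OF pos(1,2)] unfolding t1_def P_def by blast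
    have p2: "t2 \<in> {0<..<1}" using TmP[OF pos(3,4)] unfolding t2_def P_def by blast
    define Pj where "Pj = (t1+t2) * (\<gamma>/2 * (t1/(t1+t2))*(1-t1/(t1+t2))*((-a1)/t1-(-a2)/t2)\<^sup>2)"
    have m: "GG (L j) (L i) a1 b1 t1 + GG (L j) (L i) a2 b2 t2 \<ge> 2 * GG (L j) (L i) ((a1+a2)/2) ((b1+b2)/2) ((t1+t2)/2) + Pj"
      unfolding Pj_def using p1 p2 by (intro GG_mid[OF dj1 dj2 gj di1 di2 gi \<gamma>]) auto
    have Pj0: "Pj \<ge> 0"
    proof -
      have tt: "t1 + t2 > 0" using p1 p2 by auto
      have "t1/(t1+t2) \<le> 1" using p1 p2 tt by (simp add: divide_le_eq)
      then show ?thesis unfolding Pj_def using tt p1 \<gamma> by (intro mult_nonneg_nonneg) auto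
    qed
    have mid: "(t1+t2)/2 \<in> {0<..<1}" using p1 p2 by auto
    have "V ((a1+a2)/2, (b1+b2)/2) \<le> GG (L j) (L i) ((a1+a2)/2) ((b1+b2)/2) ((t1+t2)/2)"
      using pos mid by (intro Vle) auto
    moreover have "V (a1,b1) = GG (L j) (L i) a1 b1 t1" unfolding t1_def by (rule Vval[OF pos(1,2)])
    moreover have "V (a2,b2) = GG (L j) (L i) a2 b2 t2" unfolding t2_def by (rule Vval[OF pos(3,4)])
    ultimately show ?thesis using m Pj0 by linarith
  qed
  define t0 where "t0 = Tm s r"
  have P0: "P s r t0" unfolding t0_def by (rule TmP[OF sr])
  have t0i: "t0 \<in> {0<..<1}" using P0 unfolding P_def by blast
  have Deq: "D_implicit e N L (s *\<^sub>R e j) (r *\<^sub>R e i) = ereal (GG (L j) (L i) s r t0)"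
    using D_eq[OF e_inj e_unit ij sr, of t0 L] P0 unfolding P_def by blast
  have key: "(\<tau> \<in> {0<..<1} \<and> D_implicit e N L (s *\<^sub>R e j) (r *\<^sub>R e i)
              = E1 e N L \<tau> (s *\<^sub>R e j) + E2 e N L \<tau> (r *\<^sub>R e i)) \<longleftrightarrow> \<tau> = t0" for \<tau>
  proof
    assume a: "\<tau> \<in> {0<..<1} \<and> D_implicit e N L (s *\<^sub>R e j) (r *\<^sub>R e i)
              = E1 e N L \<tau> (s *\<^sub>R e j) + E2 e N L \<tau> (r *\<^sub>R e i)"
    then have "GG (L j) (L i) s r t0 = GG (L j) (L i) s r \<tau>"
      using Deq E_sum(1)[OF e_inj e_unit ij sr, of \<tau> L] by simp
    then have "P s r \<tau>" using P0 a unfolding P_def by simp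
    then show "\<tau> = t0" using GG_unique[OF dj1 dj2 gj di1 di2 gi \<gamma> sr(1), of \<tau> r t0] P0 unfolding P_def by simp
  next
    assume "\<tau> = t0"
    then show "\<tau> \<in> {0<..<1} \<and> D_implicit e N L (s *\<^sub>R e j) (r *\<^sub>R e i)
              = E1 e N L \<tau> (s *\<^sub>R e j) + E2 e N L \<tau> (r *\<^sub>R e i)"
      using t0i Deq E_sum(1)[OF e_inj e_unit ij sr, of t0 L] by simp
  qed
  have ex1: "\<exists>!\<tau>. \<tau> \<in> {0<..<1} \<and> D_implicit e N L (s *\<^sub>R e j) (r *\<^sub>R e i)
              = E1 e N L \<tau> (s *\<^sub>R e j) + E2 e N L \<tau> (r *\<^sub>R e i)"
    unfolding key by simp
  have Tthe: "(THE \<tau>. \<tau> \<in> {0<..<1} \<and> D_implicit e N L (s *\<^sub>R e j) (r *\<^sub>R e i)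
              = E1 e N L \<tau> (s *\<^sub>R e j) + E2 e N L \<tau> (r *\<^sub>R e i)) = t0"
    unfolding key by simp
  define lf where "lf = (\<lambda>q::real\<times>real. fst q * (- L' j (-s/t0)) + snd q * L' i (r/(1-t0)))"
  define ph where "ph = (\<lambda>q::real\<times>real. t0 * L j (-fst q/t0) + (1-t0) * L i (snd q/(1-t0)))"
  have phd: "(ph has_derivative lf) (at (s,r))"
    unfolding ph_def lf_def using phi_deriv[OF dj1 di1, of t0 s r] t0i by auto
  have phGG: "ph (a,b) = GG (L j) (L i) a b t0" for a b unfolding ph_def GG_def by simp
  have main: "(V has_derivative lf) (at (s,r))"
    unfolding has_derivative_at
  proof
    show "bounded_linear lf" by (rule has_derivative_bounded_linear[OF phd])
    define E where "E = (\<lambda>h. norm (ph ((s,r)+h) - ph (s,r) - lf h) / norm h)"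
    have lim: "E \<midarrow>0\<rightarrow> 0" using phd unfolding has_derivative_at E_def by blast
    have fl: "filterlim (\<lambda>h::real\<times>real. -h) (at 0) (at 0)"
      unfolding filterlim_at
      by (auto intro!: tendsto_eq_intros simp: eventually_at_filter)
    have lim2: "(\<lambda>h. E (-h)) \<midarrow>0\<rightarrow> 0" using filterlim_compose[OF lim fl] .
    have bound: "norm (V ((s,r)+h) - V (s,r) - lf h) / norm h \<le> E h + E (-h)"
      if hn: "h \<noteq> 0" "norm h < min s r" for h
    proof -
      obtain h1 h2 where h: "h = (h1,h2)" by (cases h)
      have n1: "\<bar>h1\<bar> < s" using norm_fst_le[of h1 h2] hn h by auto
      have n2: "\<bar>h2\<bar> < r" using norm_snd_le[of h2 h1] hn h by auto
      have pp: "s + h1 > 0" "r + h2 > 0" "s - h1 > 0" "r - h2 > 0" using n1 n2 by auto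
      define u where "u = V (s+h1, r+h2)"
      define v where "v = V (s-h1, r-h2)"
      define w where "w = V (s,r)"
      have u: "u \<le> ph (s+h1, r+h2)" unfolding u_def phGG using pp t0i by (intro Vle) auto
      have v: "v \<le> ph (s-h1, r-h2)" unfolding v_def phGG using pp t0i by (intro Vle) auto
      have w: "w = ph (s,r)" unfolding w_def phGG t0_def by (rule Vval[OF sr])
      have uvw: "u + v \<ge> 2 * w" unfolding u_def v_def w_def
        using Vmid[OF pp] by simp
      define A where "A = ph (s+h1, r+h2) - w - lf h"
      define B where "B = ph (s-h1, r-h2) - w - lf (-h)"
      have lneg: "lf (-h) = - lf h" unfolding lf_def by simp
      have "\<bar>u - w - lf h\<bar> \<le> \<bar>A\<bar> + \<bar>B\<bar>"
        using u v uvw lneg unfolding A_def B_def by linarith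
      moreover have nh: "norm h > 0" using hn by simp
      ultimately have "\<bar>u - w - lf h\<bar> / norm h \<le> (\<bar>A\<bar> + \<bar>B\<bar>) / norm h"
        by (intro divide_right_mono) auto
      also have "\<dots> = E h + E (-h)"
      proof -
        have q1: "(s,r) + h = (s+h1, r+h2)" unfolding h by simp
        have q2: "(s,r) + -h = (s-h1, r-h2)" unfolding h by simp
        have nm: "norm (-h) = norm h" by simp
        show ?thesis unfolding E_def A_def B_def w q1 q2 nm by (simp add: add_divide_distrib)
      qed
      finally show ?thesis unfolding u_def w_def h by simp
    qed
    show "(\<lambda>h. norm (V ((s,r)+h) - V (s,r) - lf h) / norm h) \<midarrow>0\<rightarrow> 0"
    proof (rule tendsto_sandwich[where f="\<lambda>h. 0" and h="\<lambda>h. E h + E (-h)"])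
      show "\<forall>\<^sub>F h in at 0. 0 \<le> norm (V ((s,r)+h) - V (s,r) - lf h) / norm h" by simp
      show "\<forall>\<^sub>F h in at 0. norm (V ((s,r)+h) - V (s,r) - lf h) / norm h \<le> E h + E (-h)"
        unfolding eventually_at using sr bound by (intro exI[of _ "min s r"]) auto
      show "((\<lambda>h. 0::real) \<longlongrightarrow> 0) (at 0)" by simp
      show "((\<lambda>h. E h + E (-h)) \<longlongrightarrow> 0) (at 0)" using tendsto_add[OF lim lim2] by simp
    qed
  qed
  have Fe: "(\<lambda>(a, b). real_of_ereal (D_implicit e N L (a *\<^sub>R e j) (b *\<^sub>R e i))) = V"
    by (simp add: V_def fun_eq_iff)
  have le: "(\<lambda>(h, k). h * (- L' j (- s / t0)) + k * L' i (r / (1 - t0))) = lf"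
    by (simp add: lf_def fun_eq_iff)
  show ?thesis unfolding Let_def Tthe Fe le using ex1 main by blast
qed

end
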